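(* Let $X,Y$ be sets, $f:X\to X$, and $(\mathcal{B},\mathcal{B}',\langle\cdot,\cdot\rangle,k)$ an RKBS with kernel on $X$ such that $\{k(x,\cdot):x\in X\}$ is linearly independent. Let $g:Y\to Y$ and let $\phi:Y\to X$ be a bijection with $\phi\circ g=f\circ\phi$. Let $(\mathcal{B}_\phi,\mathcal{B}'_\phi,\langle\cdot,\cdot\rangle_\phi,k_\phi)$ be the pullback RKBS on $Y$, and let $S:\mathcal{B}'_\phi\to\mathcal{B}'$, $Sh:=h\circ\phi^{-1}$. Then on $\mathrm{Span}\{k_\phi(y,\cdot):y\in Y\}$, $$K_fS=SK_g.$$ In particular, if $K_f$ is bounded (on $\mathrm{Span}\{k(x,\cdot):x\in X\}$ with the norm of $\mathcal{B}'$), then so is $K_g$ (with the norm of $\mathcal{B}'_\phi$), and the norms of their bounded extensions coincide: $\|\overline{K}_g\|=\|\overline{K}_f\|$.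
   Context: An RKBS with kernel on $X$ is a quadruple $(\mathcal{B},\mathcal{B}',\langle\cdot,\cdot\rangle,k)$: $\mathcal{B},\mathcal{B}'$ Banach spaces of functions on $X$ (pointwise operations), point evaluations on $\mathcal{B}$ continuous, $\langle\cdot,\cdot\rangle:\mathcal{B}\times\mathcal{B}'\to\mathbb{K}$ continuous bilinear, $k:X\times X\to\mathbb{K}$ with $k(x,\cdot)\in\mathcal{B}'$ and $h(x)=\langle h,k(x,\cdot)\rangle$ for all $h\in\mathcal{B}$, $x\in X$. Pullback RKBS: $\mathcal{B}_\phi:=\{h\circ\phi:h\in\mathcal{B}\}$ with $\|h\|_{\mathcal{B}_\phi}:=\|h\circ\phi^{-1}\|_\mathcal{B}$, $\mathcal{B}'_\phi:=\{h\circ\phi:h\in\mathcal{B}'\}$ with $\|h\|_{\mathcal{B}'_\phi}:=\|h\circ\phi^{-1}\|_{\mathcal{B}'}$, $\langle h,h'\rangle_\phi:=\langle h\circ\phi^{-1},h'\circ\phi^{-1}\rangle$, $k_\phi(y_1,y_2):=k(\phi(y_1),\phi(y_2))$; it is an RKBS with kernel on $Y$. Perron–Frobenius operators: $K_f$ on $\mathrm{Span}\{k(x,\cdot):x\in X\}$ is the linear extension of $k(x,\cdot)\mapsto k(f(x),\cdot)$; $K_g$ on $\mathrm{Span}\{k_\phi(y,\cdot):y\in Y\}$ is the linear extension of $k_\phi(y,\cdot)\mapsto k_\phi(g(y),\cdot)$. $\overline{K}_f,\overline{K}_g$ denote the bounded extensions to the norm closures of these spans. *)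

theory Defs
  imports "HOL-Analysis.Analysis"
begin

definition banach_fun_space ::
  "('x \<Rightarrow> 'k::{real_normed_field,banach}) set \<Rightarrow> (('x \<Rightarrow> 'k) \<Rightarrow> real) \<Rightarrow> bool" where
  "banach_fun_space B nB \<longleftrightarrow>
     (\<lambda>_. 0) \<in> B \<and>
     (\<forall>h\<in>B. \<forall>h'\<in>B. (\<lambda>x. h x + h' x) \<in> B) \<and>
     (\<forall>c. \<forall>h\<in>B. (\<lambda>x. c * h x) \<in> B) \<and>
     (\<forall>h\<in>B. 0 \<le> nB h) \<and>
     (\<forall>h\<in>B. nB h = 0 \<longleftrightarrow> h = (\<lambda>_. 0)) \<and>
     (\<forall>c. \<forall>h\<in>B. nB (\<lambda>x. c * h x) = norm c * nB h) \<and>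
     (\<forall>h\<in>B. \<forall>h'\<in>B. nB (\<lambda>x. h x + h' x) \<le> nB h + nB h') \<and>
     (\<forall>s. (\<forall>n. s n \<in> B) \<and>
          (\<forall>e>0. \<exists>N. \<forall>m\<ge>N. \<forall>n\<ge>N. nB (\<lambda>x. s m x - s n x) < e)
        \<longrightarrow> (\<exists>h\<in>B. (\<lambda>n. nB (\<lambda>x. s n x - h x)) \<longlonglongrightarrow> 0))"

text \<open>RKBS with kernel: quadruple (B, B', pairing, k), norms nB, nB'.
  The kernel is curried: \<open>k x\<close> is the function \<open>k(x,\<cdot>)\<close>.\<close>
definition is_rkbs ::
  "('x \<Rightarrow> 'k::{real_normed_field,banach}) set \<Rightarrow> (('x \<Rightarrow> 'k) \<Rightarrow> real) \<Rightarrow>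
   ('x \<Rightarrow> 'k) set \<Rightarrow> (('x \<Rightarrow> 'k) \<Rightarrow> real) \<Rightarrow>
   (('x \<Rightarrow> 'k) \<Rightarrow> ('x \<Rightarrow> 'k) \<Rightarrow> 'k) \<Rightarrow> ('x \<Rightarrow> 'x \<Rightarrow> 'k) \<Rightarrow> bool" where
  "is_rkbs B nB B' nB' pair k \<longleftrightarrow>
     banach_fun_space B nB \<and> banach_fun_space B' nB' \<and>
     (\<forall>x. \<exists>C. \<forall>h\<in>B. norm (h x) \<le> C * nB h) \<and>
     (\<forall>h'\<in>B'. \<forall>h1\<in>B. \<forall>h2\<in>B. \<forall>c.
        pair (\<lambda>x. h1 x + c * h2 x) h' = pair h1 h' + c * pair h2 h') \<and>
     (\<forall>h\<in>B. \<forall>h1'\<in>B'. \<forall>h2'\<in>B'. \<forall>c.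
        pair h (\<lambda>x. h1' x + c * h2' x) = pair h h1' + c * pair h h2') \<and>
     (\<exists>C. \<forall>h\<in>B. \<forall>h'\<in>B'. norm (pair h h') \<le> C * nB h * nB' h') \<and>
     (\<forall>x. k x \<in> B') \<and>
     (\<forall>h\<in>B. \<forall>x. h x = pair h (k x))"

definition kernel_lin_indep :: "('x \<Rightarrow> 'x \<Rightarrow> 'k::field) \<Rightarrow> bool" where
  "kernel_lin_indep k \<longleftrightarrow>
     (\<forall>A c. finite A \<and> (\<lambda>y. \<Sum>x\<in>A. c x * k x y) = (\<lambda>_. 0) \<longrightarrow> (\<forall>x\<in>A. c x = 0))"

definition kspan :: "('x \<Rightarrow> 'x \<Rightarrow> 'k::field) \<Rightarrow> ('x \<Rightarrow> 'k) set" where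
  "kspan k = {(\<lambda>y. \<Sum>x\<in>A. c x * k x y) | A c. finite A}"

text \<open>Perron--Frobenius operator: linear extension of \<open>k(x,\<cdot>) \<mapsto> k(f x,\<cdot>)\<close>
  (well defined on kspan k when the kernel sections are linearly independent).\<close>
definition PF :: "('x \<Rightarrow> 'x \<Rightarrow> 'k::field) \<Rightarrow> ('x \<Rightarrow> 'x) \<Rightarrow> ('x \<Rightarrow> 'k) \<Rightarrow> ('x \<Rightarrow> 'k)" where
  "PF k f h = (THE h'. \<exists>A c. finite A \<and> h = (\<lambda>y. \<Sum>x\<in>A. c x * k x y) \<and>
                               h' = (\<lambda>y. \<Sum>x\<in>A. c x * k (f x) y))"

definition bounded_on_span ::
  "('x \<Rightarrow> 'x \<Rightarrow> 'k::field) \<Rightarrow> (('x \<Rightarrow> 'k) \<Rightarrow> real) \<Rightarrow> (('x \<Rightarrow> 'k) \<Rightarrow> ('x \<Rightarrow> 'k)) \<Rightarrow> bool" where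
  "bounded_on_span k nB' T \<longleftrightarrow> (\<exists>C. \<forall>h\<in>kspan k. nB' (T h) \<le> C * nB' h)"

definition span_closure ::
  "('x \<Rightarrow> 'k::{real_normed_field,banach}) set \<Rightarrow> (('x \<Rightarrow> 'k) \<Rightarrow> real) \<Rightarrow> ('x \<Rightarrow> 'x \<Rightarrow> 'k) \<Rightarrow> ('x \<Rightarrow> 'k) set" where
  "span_closure B' nB' k = {h \<in> B'. \<exists>s. (\<forall>n. s n \<in> kspan k) \<and>
                                         (\<lambda>n. nB' (\<lambda>x. s n x - h x)) \<longlonglongrightarrow> 0}"

definition bext ::
  "('x \<Rightarrow> 'k::{real_normed_field,banach}) set \<Rightarrow> (('x \<Rightarrow> 'k) \<Rightarrow> real) \<Rightarrow> ('x \<Rightarrow> 'x \<Rightarrow> 'k) \<Rightarrow>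
   (('x \<Rightarrow> 'k) \<Rightarrow> ('x \<Rightarrow> 'k)) \<Rightarrow> ('x \<Rightarrow> 'k) \<Rightarrow> ('x \<Rightarrow> 'k)" where
  "bext B' nB' k T h = (THE h'. h' \<in> B' \<and>
     (\<forall>s. (\<forall>n. s n \<in> kspan k) \<and> (\<lambda>n. nB' (\<lambda>x. s n x - h x)) \<longlonglongrightarrow> 0 \<longrightarrow>
          (\<lambda>n. nB' (\<lambda>x. T (s n) x - h' x)) \<longlonglongrightarrow> 0))"

definition bext_norm ::
  "('x \<Rightarrow> 'k::{real_normed_field,banach}) set \<Rightarrow> (('x \<Rightarrow> 'k) \<Rightarrow> real) \<Rightarrow> ('x \<Rightarrow> 'x \<Rightarrow> 'k) \<Rightarrow>
   (('x \<Rightarrow> 'k) \<Rightarrow> ('x \<Rightarrow> 'k)) \<Rightarrow> real" where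
  "bext_norm B' nB' k T =
     (SUP h\<in>{h \<in> span_closure B' nB' k. nB' h \<le> 1}. nB' (bext B' nB' k T h))"

definition pb_space :: "('y \<Rightarrow> 'x) \<Rightarrow> ('x \<Rightarrow> 'k) set \<Rightarrow> ('y \<Rightarrow> 'k) set" where
  "pb_space \<phi> B = {h \<circ> \<phi> | h. h \<in> B}"

definition pb_norm :: "('y \<Rightarrow> 'x) \<Rightarrow> (('x \<Rightarrow> 'k) \<Rightarrow> real) \<Rightarrow> ('y \<Rightarrow> 'k) \<Rightarrow> real" where
  "pb_norm \<phi> nB h = nB (h \<circ> inv \<phi>)"

definition pb_pair :: "('y \<Rightarrow> 'x) \<Rightarrow> (('x \<Rightarrow> 'k) \<Rightarrow> ('x \<Rightarrow> 'k) \<Rightarrow> 'k) \<Rightarrow>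
    ('y \<Rightarrow> 'k) \<Rightarrow> ('y \<Rightarrow> 'k) \<Rightarrow> 'k" where
  "pb_pair \<phi> pair h h' = pair (h \<circ> inv \<phi>) (h' \<circ> inv \<phi>)"

definition pb_kernel :: "('y \<Rightarrow> 'x) \<Rightarrow> ('x \<Rightarrow> 'x \<Rightarrow> 'k) \<Rightarrow> 'y \<Rightarrow> 'y \<Rightarrow> 'k" where
  "pb_kernel \<phi> k y1 y2 = k (\<phi> y1) (\<phi> y2)"

definition pb_S :: "('y \<Rightarrow> 'x) \<Rightarrow> ('y \<Rightarrow> 'k) \<Rightarrow> ('x \<Rightarrow> 'k)" where
  "pb_S \<phi> h = h \<circ> inv \<phi>"

end

theory Submission
  imports Defs
begin


lemma sum_extend:
  fixes c :: "'a \<Rightarrow> 'k::field"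
  assumes "finite D" "A \<subseteq> D"
  shows "(\<Sum>x\<in>A. c x * F x) = (\<Sum>x\<in>D. (if x \<in> A then c x else 0) * F x)"
proof -
  have "(\<Sum>x\<in>D. (if x \<in> A then c x else 0) * F x) = (\<Sum>x\<in>D. if x \<in> A then c x * F x else 0)"
    by (intro sum.cong) auto
  also have "\<dots> = (\<Sum>x\<in>D \<inter> A. c x * F x)" using assms(1) by (simp add: sum.inter_restrict)
  also have "D \<inter> A = A" using assms(2) by blast
  finally show ?thesis by simp
qed

lemma PF_eq:
  fixes k :: "'x \<Rightarrow> 'x \<Rightarrow> 'k::field"
  assumes ind: "kernel_lin_indep k" and finA: "finite A"
  shows "PF k f (\<lambda>y. \<Sum>x\<in>A. c x * k x y) = (\<lambda>y. \<Sum>x\<in>A. c x * k (f x) y)"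
  unfolding PF_def
proof (rule the_equality)
  show "\<exists>A' c'. finite A' \<and> (\<lambda>y. \<Sum>x\<in>A. c x * k x y) = (\<lambda>y. \<Sum>x\<in>A'. c' x * k x y) \<and>
      (\<lambda>y. \<Sum>x\<in>A. c x * k (f x) y) = (\<lambda>y. \<Sum>x\<in>A'. c' x * k (f x) y)" using finA by blast
next
  fix h' assume "\<exists>A' c'. finite A' \<and> (\<lambda>y. \<Sum>x\<in>A. c x * k x y) = (\<lambda>y. \<Sum>x\<in>A'. c' x * k x y) \<and>
      h' = (\<lambda>y. \<Sum>x\<in>A'. c' x * k (f x) y)"
  then obtain A' c' where fin: "finite A'" and eq: "(\<lambda>y. \<Sum>x\<in>A. c x * k x y) = (\<lambda>y. \<Sum>x\<in>A'. c' x * k x y)"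
    and h': "h' = (\<lambda>y. \<Sum>x\<in>A'. c' x * k (f x) y)" by blast
  define D where "D = A \<union> A'"
  have finD: "finite D" using fin finA by (simp add: D_def)
  define e where "e x = (if x\<in>A then c x else 0) - (if x\<in>A' then c' x else 0)" for x
  have "(\<lambda>y. \<Sum>x\<in>D. e x * k x y) = (\<lambda>_. 0)"
  proof
    fix y
    have "(\<Sum>x\<in>D. e x * k x y) = (\<Sum>x\<in>D. (if x\<in>A then c x else 0) * k x y) - (\<Sum>x\<in>D. (if x\<in>A' then c' x else 0) * k x y)"
      by (simp add: e_def left_diff_distrib sum_subtractf)
    also have "\<dots> = (\<Sum>x\<in>A. c x * k x y) - (\<Sum>x\<in>A'. c' x * k x y)"
      using sum_extend[OF finD, of A c "\<lambda>x. k x y"] sum_extend[OF finD, of A' c' "\<lambda>x. k x y"]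
      by (simp add: D_def)
    also have "\<dots> = 0" using fun_cong[OF eq, of y] by simp
    finally show "(\<Sum>x\<in>D. e x * k x y) = 0" .
  qed
  then have "\<forall>x\<in>D. e x = 0" using ind finD unfolding kernel_lin_indep_def by blast
  then have coef: "\<forall>x\<in>D. (if x\<in>A then c x else 0) = (if x\<in>A' then c' x else 0)" by (simp add: e_def)
  show "h' = (\<lambda>y. \<Sum>x\<in>A. c x * k (f x) y)"
  proof
    fix y
    have "(\<Sum>x\<in>A. c x * k (f x) y) = (\<Sum>x\<in>D. (if x\<in>A then c x else 0) * k (f x) y)"
      using sum_extend[OF finD, of A c "\<lambda>x. k (f x) y"] by (simp add: D_def)
    also have "\<dots> = (\<Sum>x\<in>D. (if x\<in>A' then c' x else 0) * k (f x) y)" using coef by (intro sum.cong) auto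
    also have "\<dots> = (\<Sum>x\<in>A'. c' x * k (f x) y)"
      using sum_extend[OF finD, of A' c' "\<lambda>x. k (f x) y"] by (simp add: D_def)
    finally show "h' y = (\<Sum>x\<in>A. c x * k (f x) y)" using h' by simp
  qed
qed

lemma kspan_common:
  fixes k :: "'x \<Rightarrow> 'x \<Rightarrow> 'k::field"
  assumes "a \<in> kspan k" "b \<in> kspan k"
  shows "\<exists>D ca cb. finite D \<and> a = (\<lambda>y. \<Sum>x\<in>D. ca x * k x y) \<and> b = (\<lambda>y. \<Sum>x\<in>D. cb x * k x y)"
proof -
  obtain A c where A: "finite A" "a = (\<lambda>y. \<Sum>x\<in>A. c x * k x y)" using assms(1) unfolding kspan_def by blast
  obtain A' c' where A': "finite A'" "b = (\<lambda>y. \<Sum>x\<in>A'. c' x * k x y)" using assms(2) unfolding kspan_def by blast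
  have fD: "finite (A \<union> A')" using A A' by simp
  show ?thesis
    apply (rule exI[of _ "A \<union> A'"], rule exI[of _ "\<lambda>x. if x\<in>A then c x else 0"], rule exI[of _ "\<lambda>x. if x\<in>A' then c' x else 0"])
    using fD A A' sum_extend[OF fD, of A c] sum_extend[OF fD, of A' c'] by auto
qed

lemma kspan_diff:
  fixes k :: "'x \<Rightarrow> 'x \<Rightarrow> 'k::field"
  assumes ind: "kernel_lin_indep k" and "a \<in> kspan k" "b \<in> kspan k"
  shows "(\<lambda>x. a x - b x) \<in> kspan k \<and> PF k f (\<lambda>x. a x - b x) = (\<lambda>x. PF k f a x - PF k f b x)"
proof -
  obtain D ca cb where D: "finite D" "a = (\<lambda>y. \<Sum>x\<in>D. ca x * k x y)" "b = (\<lambda>y. \<Sum>x\<in>D. cb x * k x y)"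
    using kspan_common[OF assms(2,3)] by blast
  have e: "(\<lambda>x. a x - b x) = (\<lambda>y. \<Sum>x\<in>D. (ca x - cb x) * k x y)"
    using D by (simp add: left_diff_distrib sum_subtractf)
  have "PF k f (\<lambda>x. a x - b x) = (\<lambda>y. \<Sum>x\<in>D. (ca x - cb x) * k (f x) y)"
    unfolding e by (rule PF_eq[OF ind D(1)])
  also have "\<dots> = (\<lambda>x. PF k f a x - PF k f b x)"
    unfolding D(2,3) PF_eq[OF ind D(1)] by (simp add: left_diff_distrib sum_subtractf)
  finally show ?thesis unfolding e using D(1) by (auto simp: kspan_def)
qed

lemma B_sum:
  assumes bs: "banach_fun_space B nB" and fin: "finite A" and F: "\<forall>x\<in>A. F x \<in> B"
  shows "(\<lambda>y. \<Sum>x\<in>A. c x * F x y) \<in> B"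
  using fin F
proof (induction A rule: finite_induct)
  case empty
  then show ?case using bs unfolding banach_fun_space_def by simp
next
  case (insert a A)
  have 1: "(\<lambda>y. c a * F a y) \<in> B" using bs insert unfolding banach_fun_space_def by blast
  have 2: "(\<lambda>y. \<Sum>x\<in>A. c x * F x y) \<in> B" using insert by blast
  have add: "\<forall>h\<in>B. \<forall>h'\<in>B. (\<lambda>x. h x + h' x) \<in> B" using bs unfolding banach_fun_space_def by simp
  have "(\<lambda>y. c a * F a y + (\<Sum>x\<in>A. c x * F x y)) \<in> B"
    using add[rule_format, OF 1 2] by simp
  then show ?case using insert by simp
qed



lemma pb_indep:
  fixes k :: "'x \<Rightarrow> 'x \<Rightarrow> 'k::field" and \<phi> :: "'y \<Rightarrow> 'x"
  assumes ind: "kernel_lin_indep k" and bij: "bij \<phi>"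
  shows "kernel_lin_indep (pb_kernel \<phi> k)"
  unfolding kernel_lin_indep_def
proof (intro allI impI ballI)
  fix A c a assume H: "finite A \<and> (\<lambda>y. \<Sum>x\<in>A. c x * pb_kernel \<phi> k x y) = (\<lambda>_. 0)" and a: "a \<in> A"
  have inj: "inj \<phi>" using bij bij_is_inj by blast
  have injA: "inj_on \<phi> A" using inj_on_subset[OF inj subset_UNIV] .
  have sf: "\<And>x. \<phi> (inv \<phi> x) = x" using bij by (simp add: bij_is_surj surj_f_inv_f)
  have fs: "\<And>y. inv \<phi> (\<phi> y) = y" using inj by (simp add: inv_f_f)
  have "(\<lambda>z. \<Sum>b\<in>\<phi> ` A. c (inv \<phi> b) * k b z) = (\<lambda>_. 0)"
  proof
    fix z
    have "(\<Sum>b\<in>\<phi> ` A. c (inv \<phi> b) * k b z) = (\<Sum>x\<in>A. c x * k (\<phi> x) z)"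
      by (simp add: sum.reindex[OF injA] fs)
    also have "\<dots> = (\<Sum>x\<in>A. c x * pb_kernel \<phi> k x (inv \<phi> z))" by (simp add: pb_kernel_def sf)
    also have "\<dots> = 0" using fun_cong[OF conjunct2[OF H], of "inv \<phi> z"] by simp
    finally show "(\<Sum>b\<in>\<phi> ` A. c (inv \<phi> b) * k b z) = 0" .
  qed
  moreover have "finite (\<phi> ` A)" using H by simp
  ultimately have "\<forall>b\<in>\<phi> ` A. c (inv \<phi> b) = 0"
    using ind unfolding kernel_lin_indep_def
    by (elim allE[of _ "\<phi> ` A"] allE[of _ "\<lambda>b. c (inv \<phi> b)"]) (simp only: simp_thms)
  then have "c (inv \<phi> (\<phi> a)) = 0" using a by blast
  then show "c a = 0" by (simp add: fs)
qed

lemma kspanI: "finite A \<Longrightarrow> (\<lambda>y. \<Sum>x\<in>A. c x * k x y) \<in> kspan k"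
  unfolding kspan_def by blast

lemma kspan_to_pb:
  fixes k :: "'x \<Rightarrow> 'x \<Rightarrow> 'k::field" and \<phi> :: "'y \<Rightarrow> 'x"
  assumes ind: "kernel_lin_indep k" and bij: "bij \<phi>" and conj: "\<phi> \<circ> g = f \<circ> \<phi>"
    and u: "u \<in> kspan k"
  shows "u \<circ> \<phi> \<in> kspan (pb_kernel \<phi> k) \<and> PF (pb_kernel \<phi> k) g (u \<circ> \<phi>) = PF k f u \<circ> \<phi>"
proof -
  obtain A c where A: "finite A" "u = (\<lambda>y. \<Sum>x\<in>A. c x * k x y)" using u unfolding kspan_def by blast
  have ii: "inj (inv \<phi>)" using bij bij_imp_bij_inv bij_is_inj by blast
  have iiA: "inj_on (inv \<phi>) A" using inj_on_subset[OF ii subset_UNIV] .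
  have sf: "\<And>x. \<phi> (inv \<phi> x) = x" using bij by (simp add: bij_is_surj surj_f_inv_f)
  have fA: "finite (inv \<phi> ` A)" using A by simp
  have gg: "\<And>a. \<phi> (g a) = f (\<phi> a)" using conj unfolding comp_def by (rule fun_cong)
  have e1: "u \<circ> \<phi> = (\<lambda>y. \<Sum>a\<in>inv \<phi> ` A. c (\<phi> a) * pb_kernel \<phi> k a y)"
  proof
    fix y
    have "(\<Sum>a\<in>inv \<phi> ` A. c (\<phi> a) * pb_kernel \<phi> k a y) = (\<Sum>b\<in>A. c (\<phi> (inv \<phi> b)) * pb_kernel \<phi> k (inv \<phi> b) y)"
      by (simp add: sum.reindex[OF iiA])
    also have "\<dots> = (u \<circ> \<phi>) y" by (simp add: A pb_kernel_def sf)
    finally show "(u \<circ> \<phi>) y = (\<Sum>a\<in>inv \<phi> ` A. c (\<phi> a) * pb_kernel \<phi> k a y)" by simp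
  qed
  have "PF (pb_kernel \<phi> k) g (u \<circ> \<phi>) = (\<lambda>y. \<Sum>a\<in>inv \<phi> ` A. c (\<phi> a) * pb_kernel \<phi> k (g a) y)"
    unfolding e1 by (rule PF_eq[OF pb_indep[OF ind bij] fA])
  also have "\<dots> = PF k f u \<circ> \<phi>"
  proof
    fix y
    have "(\<Sum>a\<in>inv \<phi> ` A. c (\<phi> a) * pb_kernel \<phi> k (g a) y) = (\<Sum>b\<in>A. c (\<phi> (inv \<phi> b)) * pb_kernel \<phi> k (g (inv \<phi> b)) y)"
      by (simp add: sum.reindex[OF iiA])
    also have "\<dots> = (\<Sum>b\<in>A. c b * k (f b) (\<phi> y))" by (simp add: pb_kernel_def sf gg)
    also have "\<dots> = (PF k f u \<circ> \<phi>) y" by (simp add: A PF_eq[OF ind A(1)])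
    finally show "(\<Sum>a\<in>inv \<phi> ` A. c (\<phi> a) * pb_kernel \<phi> k (g a) y) = (PF k f u \<circ> \<phi>) y" .
  qed
  finally have "PF (pb_kernel \<phi> k) g (u \<circ> \<phi>) = PF k f u \<circ> \<phi>" .
  moreover have "u \<circ> \<phi> \<in> kspan (pb_kernel \<phi> k)" unfolding e1 by (rule kspanI[OF fA])
  ultimately show ?thesis by simp
qed

lemma kspan_from_pb:
  fixes k :: "'x \<Rightarrow> 'x \<Rightarrow> 'k::field" and \<phi> :: "'y \<Rightarrow> 'x"
  assumes bij: "bij \<phi>" and s: "s \<in> kspan (pb_kernel \<phi> k)"
  shows "s \<circ> inv \<phi> \<in> kspan k"
proof -
  obtain A c where A: "finite A" "s = (\<lambda>y. \<Sum>x\<in>A. c x * pb_kernel \<phi> k x y)" using s unfolding kspan_def by blast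
  have inj: "inj \<phi>" using bij bij_is_inj by blast
  have injA: "inj_on \<phi> A" using inj_on_subset[OF inj subset_UNIV] .
  have sf: "\<And>x. \<phi> (inv \<phi> x) = x" using bij by (simp add: bij_is_surj surj_f_inv_f)
  have fs: "\<And>y. inv \<phi> (\<phi> y) = y" using inj by (simp add: inv_f_f)
  have "s \<circ> inv \<phi> = (\<lambda>z. \<Sum>b\<in>\<phi> ` A. c (inv \<phi> b) * k b z)"
  proof
    fix z
    have "(\<Sum>b\<in>\<phi> ` A. c (inv \<phi> b) * k b z) = (\<Sum>x\<in>A. c x * k (\<phi> x) z)"
      by (simp add: sum.reindex[OF injA] fs)
    also have "\<dots> = (s \<circ> inv \<phi>) z" by (simp add: A pb_kernel_def sf)
    finally show "(s \<circ> inv \<phi>) z = (\<Sum>b\<in>\<phi> ` A. c (inv \<phi> b) * k b z)" by simp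
  qed
  moreover have "finite (\<phi> ` A)" using A by simp
  ultimately show ?thesis using kspanI by metis
qed

lemma pb_PF:
  fixes k :: "'x \<Rightarrow> 'x \<Rightarrow> 'k::field" and \<phi> :: "'y \<Rightarrow> 'x"
  assumes ind: "kernel_lin_indep k" and bij: "bij \<phi>" and conj: "\<phi> \<circ> g = f \<circ> \<phi>"
    and s: "s \<in> kspan (pb_kernel \<phi> k)"
  shows "PF (pb_kernel \<phi> k) g s \<circ> inv \<phi> = PF k f (s \<circ> inv \<phi>)"
proof -
  have sf: "\<And>x. \<phi> (inv \<phi> x) = x" using bij by (simp add: bij_is_surj surj_f_inv_f)
  have fs: "\<And>y. inv \<phi> (\<phi> y) = y" using bij by (simp add: bij_is_inj inv_f_f)
  have r: "s \<circ> inv \<phi> \<circ> \<phi> = s" by (rule ext) (simp add: fs)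
  have "PF (pb_kernel \<phi> k) g s = PF k f (s \<circ> inv \<phi>) \<circ> \<phi>"
    using kspan_to_pb[OF ind bij conj kspan_from_pb[OF bij s]] r by simp
  then show ?thesis by (simp add: comp_def sf)
qed



context
  fixes B :: "('x \<Rightarrow> 'k::{real_normed_field,banach}) set" and nB
  assumes bs: "banach_fun_space B nB"
begin

lemma bs_sub: "a \<in> B \<Longrightarrow> b \<in> B \<Longrightarrow> (\<lambda>x. a x - b x) \<in> B"
proof -
  assume a: "a \<in> B" and b: "b \<in> B"
  have sc: "\<forall>c. \<forall>h\<in>B. (\<lambda>x. c * h x) \<in> B" and add: "\<forall>h\<in>B. \<forall>h'\<in>B. (\<lambda>x. h x + h' x) \<in> B"
    using bs unfolding banach_fun_space_def by simp_all
  have "(\<lambda>x. (-1) * b x) \<in> B" using sc b by blast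
  from add[rule_format, OF a this] show ?thesis by simp
qed

lemma bs_nonneg: "a \<in> B \<Longrightarrow> 0 \<le> nB a"
  using bs unfolding banach_fun_space_def by simp

lemma bs_sym: "a \<in> B \<Longrightarrow> b \<in> B \<Longrightarrow> nB (\<lambda>x. a x - b x) = nB (\<lambda>x. b x - a x)"
proof -
  assume a: "a \<in> B" and b: "b \<in> B"
  have sc: "\<forall>c. \<forall>h\<in>B. nB (\<lambda>x. c * h x) = norm c * nB h"
    using bs unfolding banach_fun_space_def by simp
  have "nB (\<lambda>x. (-1) * (a x - b x)) = norm (-1::'k) * nB (\<lambda>x. a x - b x)"
    using sc[rule_format, where c="-1::'k", OF bs_sub[OF a b]] .
  then show ?thesis by simp
qed

lemma bs_tri: "a \<in> B \<Longrightarrow> b \<in> B \<Longrightarrow> c \<in> B \<Longrightarrow>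
    nB (\<lambda>x. a x - c x) \<le> nB (\<lambda>x. a x - b x) + nB (\<lambda>x. b x - c x)"
proof -
  assume a: "a \<in> B" and b: "b \<in> B" and c: "c \<in> B"
  have tr: "\<forall>h\<in>B. \<forall>h'\<in>B. nB (\<lambda>x. h x + h' x) \<le> nB h + nB h'"
    using bs unfolding banach_fun_space_def by simp
  from tr[rule_format, OF bs_sub[OF a b] bs_sub[OF b c]] show ?thesis by simp
qed

lemma bs_zero: "a \<in> B \<Longrightarrow> b \<in> B \<Longrightarrow> nB (\<lambda>x. a x - b x) = 0 \<Longrightarrow> a = b"
proof -
  assume a: "a \<in> B" and b: "b \<in> B" and z: "nB (\<lambda>x. a x - b x) = 0"
  have "\<forall>h\<in>B. nB h = 0 \<longleftrightarrow> h = (\<lambda>_. 0)" using bs unfolding banach_fun_space_def by simp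
  then have eq: "(\<lambda>x. a x - b x) = (\<lambda>_. 0)" using bs_sub[OF a b] z by blast
  show "a = b"
  proof
    fix x show "a x = b x" using fun_cong[OF eq, of x] by simp
  qed
qed

lemma bs_complete: "(\<forall>n. s n \<in> B) \<Longrightarrow> (\<forall>e>0. \<exists>N. \<forall>m\<ge>N. \<forall>n\<ge>N. nB (\<lambda>x. s m x - s n x) < e)
   \<Longrightarrow> (\<exists>h\<in>B. (\<lambda>n. nB (\<lambda>x. s n x - h x)) \<longlonglongrightarrow> 0)"
  using bs unfolding banach_fun_space_def by blast

end

lemma bext_char:
  fixes B' :: "('x \<Rightarrow> 'k::{real_normed_field,banach}) set" and T
  assumes bs: "banach_fun_space B' nB'"
   and sub: "kspan k \<subseteq> B'"
   and TB: "\<forall>u\<in>kspan k. T u \<in> B'"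
   and lin: "\<forall>a\<in>kspan k. \<forall>b\<in>kspan k. (\<lambda>x. a x - b x) \<in> kspan k \<and> T (\<lambda>x. a x - b x) = (\<lambda>x. T a x - T b x)"
   and bnd: "\<forall>u\<in>kspan k. nB' (T u) \<le> C * nB' u"
   and h: "h \<in> span_closure B' nB' k"
  defines "P \<equiv> \<lambda>h'. h' \<in> B' \<and> (\<forall>s. (\<forall>n. s n \<in> kspan k) \<and> (\<lambda>n. nB' (\<lambda>x. s n x - h x)) \<longlonglongrightarrow> 0 \<longrightarrow>
          (\<lambda>n. nB' (\<lambda>x. T (s n) x - h' x)) \<longlonglongrightarrow> 0)"
  shows "P (bext B' nB' k T h) \<and> (\<forall>h'. P h' \<longrightarrow> h' = bext B' nB' k T h)"
proof -
  obtain s where s: "\<forall>n. s n \<in> kspan k" and hB: "h \<in> B'" and sl: "(\<lambda>n. nB' (\<lambda>x. s n x - h x)) \<longlonglongrightarrow> 0"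
    using h unfolding span_closure_def by blast
  have sB: "\<And>n. s n \<in> B'" using s sub by blast
  have TsB: "\<And>n. T (s n) \<in> B'" using s TB by blast
  define M where "M = \<bar>C\<bar> + 1"
  have M: "M > 0" "\<bar>C\<bar> < M" by (auto simp: M_def)
  have Tdiff: "nB' (\<lambda>x. T a x - T b x) \<le> \<bar>C\<bar> * (nB' (\<lambda>x. a x - h x) + nB' (\<lambda>x. b x - h x))"
    if a: "a \<in> kspan k" and b: "b \<in> kspan k" for a b
  proof -
    have aB: "a \<in> B'" and bB: "b \<in> B'" using a b sub by auto
    have "nB' (\<lambda>x. T a x - T b x) = nB' (T (\<lambda>x. a x - b x))" using lin a b by simp
    also have "\<dots> \<le> C * nB' (\<lambda>x. a x - b x)" using bnd lin a b by blast
    also have "\<dots> \<le> \<bar>C\<bar> * nB' (\<lambda>x. a x - b x)"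
      using bs_nonneg[OF bs bs_sub[OF bs aB bB]] by (simp add: mult_right_mono)
    also have "\<dots> \<le> \<bar>C\<bar> * (nB' (\<lambda>x. a x - h x) + nB' (\<lambda>x. h x - b x))"
      by (rule mult_left_mono[OF bs_tri[OF bs aB hB bB]]) simp
    also have "\<dots> = \<bar>C\<bar> * (nB' (\<lambda>x. a x - h x) + nB' (\<lambda>x. b x - h x))"
      using bs_sym[OF bs hB bB] by simp
    finally show ?thesis .
  qed
  have cauchy: "\<forall>e>0. \<exists>N. \<forall>m\<ge>N. \<forall>n\<ge>N. nB' (\<lambda>x. T (s m) x - T (s n) x) < e"
  proof (intro allI impI)
    fix e :: real assume e: "e > 0"
    then have "e / (2*M) > 0" using M by simp
    then obtain N where N: "\<forall>n\<ge>N. dist (nB' (\<lambda>x. s n x - h x)) 0 < e / (2*M)"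
      using sl unfolding lim_sequentially by blast
    have "\<forall>m\<ge>N. \<forall>n\<ge>N. nB' (\<lambda>x. T (s m) x - T (s n) x) < e"
    proof (intro allI impI)
      fix m n assume mn: "m \<ge> N" "n \<ge> N"
      have am: "nB' (\<lambda>x. s m x - h x) < e/(2*M)" and an: "nB' (\<lambda>x. s n x - h x) < e/(2*M)"
        using N mn by auto
      have "nB' (\<lambda>x. T (s m) x - T (s n) x) \<le> \<bar>C\<bar> * (nB' (\<lambda>x. s m x - h x) + nB' (\<lambda>x. s n x - h x))"
        using Tdiff s by blast
      also have "\<dots> \<le> \<bar>C\<bar> * (e / M)"
        using am an by (intro mult_left_mono) (auto simp: field_simps)
      also have "\<dots> < M * (e / M)" using M e by (intro mult_strict_right_mono) auto
      also have "\<dots> = e" using M by simp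
      finally show "nB' (\<lambda>x. T (s m) x - T (s n) x) < e" .
    qed
    then show "\<exists>N. \<forall>m\<ge>N. \<forall>n\<ge>N. nB' (\<lambda>x. T (s m) x - T (s n) x) < e" by blast
  qed
  obtain h' where h'B: "h' \<in> B'" and h'l: "(\<lambda>n. nB' (\<lambda>x. T (s n) x - h' x)) \<longlonglongrightarrow> 0"
    using bs_complete[OF bs, of "\<lambda>n. T (s n)"] TsB cauchy by blast
  have Ph': "P h'"
    unfolding P_def
  proof (intro conjI allI impI h'B)
    fix s' assume H: "(\<forall>n. s' n \<in> kspan k) \<and> (\<lambda>n. nB' (\<lambda>x. s' n x - h x)) \<longlonglongrightarrow> 0"
    have s'B: "\<And>n. s' n \<in> B'" using H sub by blast
    have Ts'B: "\<And>n. T (s' n) \<in> B'" using H TB by blast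
    have up: "(\<lambda>n. \<bar>C\<bar> * (nB' (\<lambda>x. s' n x - h x) + nB' (\<lambda>x. s n x - h x)) + nB' (\<lambda>x. T (s n) x - h' x)) \<longlonglongrightarrow> \<bar>C\<bar> * (0 + 0) + 0"
      by (intro tendsto_intros H[THEN conjunct2] sl h'l)
    show "(\<lambda>n. nB' (\<lambda>x. T (s' n) x - h' x)) \<longlonglongrightarrow> 0"
    proof (rule tendsto_sandwich[of "\<lambda>_. 0" _ _ "\<lambda>n. \<bar>C\<bar> * (nB' (\<lambda>x. s' n x - h x) + nB' (\<lambda>x. s n x - h x)) + nB' (\<lambda>x. T (s n) x - h' x)"])
      show "\<forall>\<^sub>F n in sequentially. 0 \<le> nB' (\<lambda>x. T (s' n) x - h' x)"
        using bs_nonneg[OF bs bs_sub[OF bs Ts'B h'B]] by simp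
      show "\<forall>\<^sub>F n in sequentially. nB' (\<lambda>x. T (s' n) x - h' x) \<le> \<bar>C\<bar> * (nB' (\<lambda>x. s' n x - h x) + nB' (\<lambda>x. s n x - h x)) + nB' (\<lambda>x. T (s n) x - h' x)"
      proof (rule always_eventually, rule allI)
        fix n
        have "nB' (\<lambda>x. T (s' n) x - h' x) \<le> nB' (\<lambda>x. T (s' n) x - T (s n) x) + nB' (\<lambda>x. T (s n) x - h' x)"
          by (rule bs_tri[OF bs Ts'B TsB h'B])
        also have "\<dots> \<le> \<bar>C\<bar> * (nB' (\<lambda>x. s' n x - h x) + nB' (\<lambda>x. s n x - h x)) + nB' (\<lambda>x. T (s n) x - h' x)"
          using Tdiff H s by simp
        finally show "nB' (\<lambda>x. T (s' n) x - h' x) \<le> \<bar>C\<bar> * (nB' (\<lambda>x. s' n x - h x) + nB' (\<lambda>x. s n x - h x)) + nB' (\<lambda>x. T (s n) x - h' x)" .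
      qed
    qed (use up in simp_all)
  qed
  have uniq: "h2 = h'" if P2: "P h2" for h2
  proof -
    have h2B: "h2 \<in> B'" and l2: "(\<lambda>n. nB' (\<lambda>x. T (s n) x - h2 x)) \<longlonglongrightarrow> 0"
      using P2 s sl unfolding P_def by blast+
    have lim: "(\<lambda>n. nB' (\<lambda>x. T (s n) x - h2 x) + nB' (\<lambda>x. T (s n) x - h' x)) \<longlonglongrightarrow> 0 + 0"
      by (intro tendsto_intros l2 h'l)
    have le: "nB' (\<lambda>x. h2 x - h' x) \<le> nB' (\<lambda>x. T (s n) x - h2 x) + nB' (\<lambda>x. T (s n) x - h' x)" for n
      using bs_tri[OF bs h2B TsB h'B] bs_sym[OF bs h2B TsB] by simp
    have "nB' (\<lambda>x. h2 x - h' x) \<le> 0"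
      using lim le by (intro LIMSEQ_le_const[where X="\<lambda>n. nB' (\<lambda>x. T (s n) x - h2 x) + nB' (\<lambda>x. T (s n) x - h' x)"]) auto
    then have "nB' (\<lambda>x. h2 x - h' x) = 0" using bs_nonneg[OF bs bs_sub[OF bs h2B h'B]] by simp
    then show ?thesis using bs_zero[OF bs h2B h'B] by simp
  qed
  have ex1: "\<exists>!h'. P h'" using Ph' uniq by blast
  have "bext B' nB' k T h = (THE h'. P h')" unfolding bext_def P_def by simp
  then have "P (bext B' nB' k T h)" using theI'[OF ex1] by simp
  then show ?thesis using ex1 by blast
qed



theorem proposition1:
  fixes B B' :: "('x \<Rightarrow> 'k::{real_normed_field,banach}) set"
    and nB nB' :: "('x \<Rightarrow> 'k) \<Rightarrow> real"
    and pair :: "('x \<Rightarrow> 'k) \<Rightarrow> ('x \<Rightarrow> 'k) \<Rightarrow> 'k"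
    and k :: "'x \<Rightarrow> 'x \<Rightarrow> 'k"
    and f :: "'x \<Rightarrow> 'x" and g :: "'y \<Rightarrow> 'y" and \<phi> :: "'y \<Rightarrow> 'x"
  assumes rkbs: "is_rkbs B nB B' nB' pair k"
    and indep: "kernel_lin_indep k"
    and bij: "bij \<phi>"
    and conj: "\<phi> \<circ> g = f \<circ> \<phi>"
  shows "(\<forall>h\<in>kspan (pb_kernel \<phi> k).
            PF k f (pb_S \<phi> h) = pb_S \<phi> (PF (pb_kernel \<phi> k) g h))
       \<and> (bounded_on_span k nB' (PF k f) \<longrightarrow>
            bounded_on_span (pb_kernel \<phi> k) (pb_norm \<phi> nB') (PF (pb_kernel \<phi> k) g)
          \<and> bext_norm (pb_space \<phi> B') (pb_norm \<phi> nB') (pb_kernel \<phi> k) (PF (pb_kernel \<phi> k) g)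
              = bext_norm B' nB' k (PF k f))"
proof -
  have sf: "\<And>x. \<phi> (inv \<phi> x) = x" using bij by (simp add: bij_is_surj surj_f_inv_f)
  have fs: "\<And>y. inv \<phi> (\<phi> y) = y" using bij by (simp add: bij_is_inj inv_f_f)
  have cb1: "\<And>u::'x\<Rightarrow>'k. u \<circ> \<phi> \<circ> inv \<phi> = u" by (rule ext) (simp add: sf)
  have cb2: "\<And>H::'y\<Rightarrow>'k. H \<circ> inv \<phi> \<circ> \<phi> = H" by (rule ext) (simp add: fs)
  have bsB': "banach_fun_space B' nB'" and kB': "\<forall>x. k x \<in> B'"
    using rkbs unfolding is_rkbs_def by simp_all
  have sub: "kspan k \<subseteq> B'"
  proof
    fix u assume "u \<in> kspan k"
    then obtain A c where "finite A" "u = (\<lambda>y. \<Sum>x\<in>A. c x * k x y)" unfolding kspan_def by blast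
    then show "u \<in> B'" using B_sum[OF bsB', of A k c] kB' by simp
  qed
  have TB: "\<forall>u\<in>kspan k. PF k f u \<in> B'"
  proof
    fix u assume "u \<in> kspan k"
    then obtain A c where A: "finite A" "u = (\<lambda>y. \<Sum>x\<in>A. c x * k x y)" unfolding kspan_def by blast
    then show "PF k f u \<in> B'" using B_sum[OF bsB', of A "\<lambda>x. k (f x)" c] kB' PF_eq[OF indep A(1)] by simp
  qed
  have lin: "\<forall>a\<in>kspan k. \<forall>b\<in>kspan k. (\<lambda>x. a x - b x) \<in> kspan k \<and> PF k f (\<lambda>x. a x - b x) = (\<lambda>x. PF k f a x - PF k f b x)"
    using kspan_diff[OF indep] by blast
  have part1: "\<forall>h\<in>kspan (pb_kernel \<phi> k). PF k f (pb_S \<phi> h) = pb_S \<phi> (PF (pb_kernel \<phi> k) g h)"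
    using pb_PF[OF indep bij conj] by (simp add: pb_S_def)
  have N1: "\<And>a b. pb_norm \<phi> nB' (\<lambda>x. a x - b x) = nB' (\<lambda>x. (a \<circ> inv \<phi>) x - (b \<circ> inv \<phi>) x)"
    by (simp add: pb_norm_def comp_def)
  have R1: "H \<in> pb_space \<phi> B' \<longleftrightarrow> H \<circ> inv \<phi> \<in> B'" for H
  proof
    assume "H \<in> pb_space \<phi> B'"
    then obtain h where "h \<in> B'" "H = h \<circ> \<phi>" unfolding pb_space_def by blast
    then show "H \<circ> inv \<phi> \<in> B'" using cb1 by simp
  next
    assume "H \<circ> inv \<phi> \<in> B'"
    then show "H \<in> pb_space \<phi> B'" unfolding pb_space_def using cb2[of H] by (metis (mono_tags, lifting) mem_Collect_eq)
  qed
  have SC: "H \<in> span_closure (pb_space \<phi> B') (pb_norm \<phi> nB') (pb_kernel \<phi> k) \<longleftrightarrow> H \<circ> inv \<phi> \<in> span_closure B' nB' k" for H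
  proof
    assume "H \<in> span_closure (pb_space \<phi> B') (pb_norm \<phi> nB') (pb_kernel \<phi> k)"
    then obtain s where H: "H \<in> pb_space \<phi> B'" "\<forall>n. s n \<in> kspan (pb_kernel \<phi> k)"
      "(\<lambda>n. pb_norm \<phi> nB' (\<lambda>x. s n x - H x)) \<longlonglongrightarrow> 0" unfolding span_closure_def by blast
    have "\<forall>n. s n \<circ> inv \<phi> \<in> kspan k" using H(2) kspan_from_pb[OF bij] by blast
    moreover have "(\<lambda>n. nB' (\<lambda>x. (s n \<circ> inv \<phi>) x - (H \<circ> inv \<phi>) x)) \<longlonglongrightarrow> 0" using H(3) by (simp only: N1)
    moreover have "H \<circ> inv \<phi> \<in> B'" using H(1) R1 by blast
    ultimately show "H \<circ> inv \<phi> \<in> span_closure B' nB' k" unfolding span_closure_def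
      by (intro CollectI conjI exI[of _ "\<lambda>n. s n \<circ> inv \<phi>"]) auto
  next
    assume "H \<circ> inv \<phi> \<in> span_closure B' nB' k"
    then obtain s where H: "H \<circ> inv \<phi> \<in> B'" "\<forall>n. s n \<in> kspan k"
      "(\<lambda>n. nB' (\<lambda>x. s n x - (H \<circ> inv \<phi>) x)) \<longlonglongrightarrow> 0" unfolding span_closure_def by blast
    have "\<forall>n. s n \<circ> \<phi> \<in> kspan (pb_kernel \<phi> k)" using H(2) kspan_to_pb[OF indep bij conj] by blast
    moreover have "(\<lambda>n. pb_norm \<phi> nB' (\<lambda>x. (s n \<circ> \<phi>) x - H x)) \<longlonglongrightarrow> 0" using H(3) by (simp only: N1 cb1)
    moreover have "H \<in> pb_space \<phi> B'" using H(1) R1 by blast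
    ultimately show "H \<in> span_closure (pb_space \<phi> B') (pb_norm \<phi> nB') (pb_kernel \<phi> k)"
      unfolding span_closure_def by (intro CollectI conjI exI[of _ "\<lambda>n. s n \<circ> \<phi>"]) auto
  qed
  define Ppb where "Ppb H H' \<longleftrightarrow> H' \<in> pb_space \<phi> B' \<and> (\<forall>s. (\<forall>n. s n \<in> kspan (pb_kernel \<phi> k)) \<and>
      (\<lambda>n. pb_norm \<phi> nB' (\<lambda>x. s n x - H x)) \<longlonglongrightarrow> 0 \<longrightarrow>
      (\<lambda>n. pb_norm \<phi> nB' (\<lambda>x. PF (pb_kernel \<phi> k) g (s n) x - H' x)) \<longlonglongrightarrow> 0)" for H H'
  define Px where "Px h h' \<longleftrightarrow> h' \<in> B' \<and> (\<forall>s. (\<forall>n. s n \<in> kspan k) \<and>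
      (\<lambda>n. nB' (\<lambda>x. s n x - h x)) \<longlonglongrightarrow> 0 \<longrightarrow>
      (\<lambda>n. nB' (\<lambda>x. PF k f (s n) x - h' x)) \<longlonglongrightarrow> 0)" for h h'
  have PT: "Ppb H H' \<longleftrightarrow> Px (H \<circ> inv \<phi>) (H' \<circ> inv \<phi>)" for H H'
  proof
    assume P: "Ppb H H'"
    show "Px (H \<circ> inv \<phi>) (H' \<circ> inv \<phi>)" unfolding Px_def
    proof (intro conjI allI impI)
      show "H' \<circ> inv \<phi> \<in> B'" using P R1 unfolding Ppb_def by blast
      fix s assume S: "(\<forall>n. s n \<in> kspan k) \<and> (\<lambda>n. nB' (\<lambda>x. s n x - (H \<circ> inv \<phi>) x)) \<longlonglongrightarrow> 0"
      have 1: "\<forall>n. s n \<circ> \<phi> \<in> kspan (pb_kernel \<phi> k)" using S kspan_to_pb[OF indep bij conj] by blast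
      have 2: "(\<lambda>n. pb_norm \<phi> nB' (\<lambda>x. (s n \<circ> \<phi>) x - H x)) \<longlonglongrightarrow> 0" using S by (simp only: N1 cb1)
      have "(\<lambda>n. pb_norm \<phi> nB' (\<lambda>x. PF (pb_kernel \<phi> k) g (s n \<circ> \<phi>) x - H' x)) \<longlonglongrightarrow> 0"
        using P 1 2 unfolding Ppb_def by (elim conjE allE[of _ "\<lambda>n. s n \<circ> \<phi>"]) simp
      moreover have "PF (pb_kernel \<phi> k) g (s n \<circ> \<phi>) \<circ> inv \<phi> = PF k f (s n)" for n
      proof -
        have "PF (pb_kernel \<phi> k) g (s n \<circ> \<phi>) = PF k f (s n) \<circ> \<phi>"
          using kspan_to_pb[OF indep bij conj, of "s n"] S by blast
        then show ?thesis by (simp only: cb1)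
      qed
      ultimately show "(\<lambda>n. nB' (\<lambda>x. PF k f (s n) x - (H' \<circ> inv \<phi>) x)) \<longlonglongrightarrow> 0" by (simp only: N1)
    qed
  next
    assume P: "Px (H \<circ> inv \<phi>) (H' \<circ> inv \<phi>)"
    show "Ppb H H'" unfolding Ppb_def
    proof (intro conjI allI impI)
      show "H' \<in> pb_space \<phi> B'" using P R1 unfolding Px_def by blast
      fix s assume S: "(\<forall>n. s n \<in> kspan (pb_kernel \<phi> k)) \<and> (\<lambda>n. pb_norm \<phi> nB' (\<lambda>x. s n x - H x)) \<longlonglongrightarrow> 0"
      have 1: "\<forall>n. s n \<circ> inv \<phi> \<in> kspan k" using S kspan_from_pb[OF bij] by blast
      have 2: "(\<lambda>n. nB' (\<lambda>x. (s n \<circ> inv \<phi>) x - (H \<circ> inv \<phi>) x)) \<longlonglongrightarrow> 0" using S by (simp only: N1)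
      have "(\<lambda>n. nB' (\<lambda>x. PF k f (s n \<circ> inv \<phi>) x - (H' \<circ> inv \<phi>) x)) \<longlonglongrightarrow> 0"
        using P 1 2 unfolding Px_def by (elim conjE allE[of _ "\<lambda>n. s n \<circ> inv \<phi>"]) simp
      moreover have "PF (pb_kernel \<phi> k) g (s n) \<circ> inv \<phi> = PF k f (s n \<circ> inv \<phi>)" for n
        using pb_PF[OF indep bij conj] S by blast
      ultimately show "(\<lambda>n. pb_norm \<phi> nB' (\<lambda>x. PF (pb_kernel \<phi> k) g (s n) x - H' x)) \<longlonglongrightarrow> 0"
        by (simp only: N1)
    qed
  qed
  show ?thesis
  proof (intro conjI impI part1)
    assume "bounded_on_span k nB' (PF k f)"
    then obtain C where bnd: "\<forall>u\<in>kspan k. nB' (PF k f u) \<le> C * nB' u" unfolding bounded_on_span_def by blast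
    show "bounded_on_span (pb_kernel \<phi> k) (pb_norm \<phi> nB') (PF (pb_kernel \<phi> k) g)"
      unfolding bounded_on_span_def
    proof (intro exI ballI)
      fix s assume s: "s \<in> kspan (pb_kernel \<phi> k)"
      have "pb_norm \<phi> nB' (PF (pb_kernel \<phi> k) g s) = nB' (PF k f (s \<circ> inv \<phi>))"
        unfolding pb_norm_def using pb_PF[OF indep bij conj s] by simp
      also have "\<dots> \<le> C * nB' (s \<circ> inv \<phi>)" using bnd kspan_from_pb[OF bij s] by blast
      finally show "pb_norm \<phi> nB' (PF (pb_kernel \<phi> k) g s) \<le> C * pb_norm \<phi> nB' s"
        unfolding pb_norm_def .
    qed
    have BE: "bext (pb_space \<phi> B') (pb_norm \<phi> nB') (pb_kernel \<phi> k) (PF (pb_kernel \<phi> k) g) (h \<circ> \<phi>)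
        = bext B' nB' k (PF k f) h \<circ> \<phi>" if h: "h \<in> span_closure B' nB' k" for h
    proof -
      have ch: "Px h (bext B' nB' k (PF k f) h) \<and> (\<forall>h'. Px h h' \<longrightarrow> h' = bext B' nB' k (PF k f) h)"
        using bext_char[OF bsB' sub TB lin bnd h] unfolding Px_def by blast
      have e: "Ppb (h \<circ> \<phi>) (bext B' nB' k (PF k f) h \<circ> \<phi>)" using ch by (simp only: PT cb1)
      have u: "H1 = bext B' nB' k (PF k f) h \<circ> \<phi>" if "Ppb (h \<circ> \<phi>) H1" for H1
      proof -
        have "Px h (H1 \<circ> inv \<phi>)" using that by (simp only: PT cb1)
        then have "H1 \<circ> inv \<phi> = bext B' nB' k (PF k f) h" using ch by blast
        moreover have "H1 = H1 \<circ> inv \<phi> \<circ> \<phi>" by (simp only: cb2)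
        ultimately show ?thesis by simp
      qed
      have "bext (pb_space \<phi> B') (pb_norm \<phi> nB') (pb_kernel \<phi> k) (PF (pb_kernel \<phi> k) g) (h \<circ> \<phi>)
          = (THE H'. Ppb (h \<circ> \<phi>) H')" unfolding bext_def Ppb_def by simp
      also have "\<dots> = bext B' nB' k (PF k f) h \<circ> \<phi>" by (rule the_equality[where P="Ppb (h \<circ> \<phi>)", OF e u])
      finally show ?thesis .
    qed
    have Hy: "{H \<in> span_closure (pb_space \<phi> B') (pb_norm \<phi> nB') (pb_kernel \<phi> k). pb_norm \<phi> nB' H \<le> 1}
        = (\<lambda>h. h \<circ> \<phi>) ` {h \<in> span_closure B' nB' k. nB' h \<le> 1}"
    proof (intro equalityI subsetI)
      fix H assume "H \<in> {H \<in> span_closure (pb_space \<phi> B') (pb_norm \<phi> nB') (pb_kernel \<phi> k). pb_norm \<phi> nB' H \<le> 1}"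
      then have "H \<circ> inv \<phi> \<in> {h \<in> span_closure B' nB' k. nB' h \<le> 1}" using SC unfolding pb_norm_def by auto
      then show "H \<in> (\<lambda>h. h \<circ> \<phi>) ` {h \<in> span_closure B' nB' k. nB' h \<le> 1}" by (intro image_eqI[of _ _ "H \<circ> inv \<phi>"]) (simp_all add: cb2)
    next
      fix H assume "H \<in> (\<lambda>h. h \<circ> \<phi>) ` {h \<in> span_closure B' nB' k. nB' h \<le> 1}"
      then obtain h where "h \<in> span_closure B' nB' k" "nB' h \<le> 1" "H = h \<circ> \<phi>" by blast
      then show "H \<in> {H \<in> span_closure (pb_space \<phi> B') (pb_norm \<phi> nB') (pb_kernel \<phi> k). pb_norm \<phi> nB' H \<le> 1}"
        using SC[of H] cb1[of h] unfolding pb_norm_def by simp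
    qed
    show "bext_norm (pb_space \<phi> B') (pb_norm \<phi> nB') (pb_kernel \<phi> k) (PF (pb_kernel \<phi> k) g) = bext_norm B' nB' k (PF k f)"
      unfolding bext_norm_def Hy image_image
    proof (rule SUP_cong[OF refl])
      fix h assume "h \<in> {h \<in> span_closure B' nB' k. nB' h \<le> 1}"
      then show "pb_norm \<phi> nB' (bext (pb_space \<phi> B') (pb_norm \<phi> nB') (pb_kernel \<phi> k) (PF (pb_kernel \<phi> k) g) (h \<circ> \<phi>))
          = nB' (bext B' nB' k (PF k f) h)"
        using BE cb1 unfolding pb_norm_def by simp
    qed
  qed
qed

end
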